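(* Let $\mathcal{S}\subseteq\mathcal{P}_{fin}(\mathbb{N})$ be an IP set, $r\geq1$, and $c:\mathcal{S}\rightarrow[1,r]$ a coloring. Then at least one of the following holds: (1) there is an IP set $\mathcal{S}'\subseteq\mathcal{S}$ such that $c$ is constant on $\mathcal{S}'$; or (2) there are a finite collection $\mathcal{B}\subseteq\mathcal{S}$ and an IP set $\mathcal{T}\subseteq\mathcal{S}-\mathcal{B}$ such that $\mathcal{B}$ full-matches $\mathcal{T}$.
   Context: $\mathcal{P}_{fin}(\mathbb{N})$ is the set of finite subsets of $\mathbb{N}$. A set $\mathcal{S}\subseteq\mathcal{P}_{fin}(\mathbb{N})$ is an IP set if it is closed under finite unions and contains an infinite family of pairwise disjoint elements. For $B\in\mathcal{S}$, $\mathcal{S}-B:=\{T\in\mathcal{S}: T\cap B=\emptyset\}$, and for $\mathcal{B}\subseteq\mathcal{S}$, $\mathcal{S}-\mathcal{B}:=\bigcap_{B\in\mathcal{B}}(\mathcal{S}-B)$. Relative to a coloring $c$: a family $\mathcal{D}$ full-matches a set $B$ if there is $D\in\mathcal{D}$ with $c(D)=c(B)=c(D\cup B)$; $\mathcal{D}$ full-matches a family $\mathcal{B}$ if it full-matches every $B\in\mathcal{B}$. *)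

theory Defs
  imports Main
begin

definition IP_set :: "nat set set \<Rightarrow> bool" where
  "IP_set S \<longleftrightarrow>
     (\<forall>A\<in>S. finite A) \<and>
     (\<forall>F. finite F \<and> F \<noteq> {} \<and> F \<subseteq> S \<longrightarrow> \<Union>F \<in> S) \<and>
     (\<exists>D. infinite D \<and> D \<subseteq> S \<and> (\<forall>A\<in>D. \<forall>B\<in>D. A \<noteq> B \<longrightarrow> A \<inter> B = {}))"

definition minus_family :: "nat set set \<Rightarrow> nat set set \<Rightarrow> nat set set" where
  "minus_family S \<B> = {T \<in> S. \<forall>B\<in>\<B>. T \<inter> B = {}}"

definition full_matches_set :: "(nat set \<Rightarrow> nat) \<Rightarrow> nat set set \<Rightarrow> nat set \<Rightarrow> bool" where
  "full_matches_set c \<D> B \<longleftrightarrow> (\<exists>D\<in>\<D>. c D = c B \<and> c B = c (D \<union> B))"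

definition full_matches :: "(nat set \<Rightarrow> nat) \<Rightarrow> nat set set \<Rightarrow> nat set set \<Rightarrow> bool" where
  "full_matches c \<D> \<B> \<longleftrightarrow> (\<forall>B\<in>\<B>. full_matches_set c \<D> B)"

end

theory Submission
  imports Defs
begin

locale uf =
  fixes F :: "'a filter"
  assumes proper: "F \<noteq> bot"
  assumes ultra: "eventually P F \<or> eventually (\<lambda>x. \<not> P x) F"
begin

lemma eventually_not_iff: "eventually (\<lambda>x. \<not> P x) F \<longleftrightarrow> \<not> eventually P F"
proof
  assume a: "eventually (\<lambda>x. \<not> P x) F"
  show "\<not> eventually P F"
  proof
    assume "eventually P F"
    with a have "eventually (\<lambda>x. False) F"
      by (auto elim: eventually_rev_mp eventually_mono)
    with proper show False by (simp add: eventually_False)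
  qed
next
  assume "\<not> eventually P F" then show "eventually (\<lambda>x. \<not> P x) F" using ultra[of P] by auto
qed

lemma max_filter:
  assumes G: "G \<noteq> bot" and sub: "G \<le> F"
  shows "F = G"
proof (rule antisym)
  show "F \<le> G"
    unfolding le_filter_def
  proof (intro allI impI)
    fix P assume gp: "eventually P G"
    show "eventually P F"
    proof (rule ccontr)
      assume "\<not> eventually P F"
      then have "eventually (\<lambda>x. \<not> P x) F" using eventually_not_iff by blast
      then have "eventually (\<lambda>x. \<not> P x) G" using sub unfolding le_filter_def by blast
      with gp have "eventually (\<lambda>x. False) G"
        by (auto elim: eventually_rev_mp eventually_mono)
      with G show False by (simp add: eventually_False)
    qed
  qed
qed fact

end

lemma extend_filter': "frequently P F \<Longrightarrow> inf F (principal {x. P x}) \<noteq> bot"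
  by (simp add: trivial_limit_def eventually_inf_principal not_eventually)

lemma max_filter_uf:
  assumes "F \<noteq> bot"
  assumes max: "\<And>G. G \<noteq> bot \<Longrightarrow> G \<le> F \<Longrightarrow> F = G"
  shows "uf F"
proof
  show "eventually P F \<or> (\<forall>\<^sub>Fx in F. \<not> P x)" for P
  proof (rule disjCI)
    assume "\<not> (\<forall>\<^sub>Fx in F. \<not> P x)"
    then have "inf F (principal {x. P x}) \<noteq> bot"
      by (simp add: not_eventually extend_filter')
    then have F: "F = inf F (principal {x. P x})"
      by (rule max) simp
    show "eventually P F"
      by (subst F) (simp add: eventually_inf_principal)
  qed
qed fact

lemma ex_uf:
  fixes F :: "'a filter"
  assumes F: "F \<noteq> bot"
  shows "\<exists>U\<le>F. uf U"
proof -
  let ?X = "{G. G \<noteq> bot \<and> G \<le> F}"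
  let ?R = "{(b, a). a \<noteq> bot \<and> a \<le> b \<and> b \<le> F}"

  have bot_notin_R: "c \<in> Chains ?R \<Longrightarrow> bot \<notin> c" for c
    by (auto simp: Chains_def)

  have [simp]: "Field ?R = ?X"
    by (auto simp: Field_def bot_unique)

  have "\<exists>m\<in>Field ?R. \<forall>a\<in>Field ?R. (m, a) \<in> ?R \<longrightarrow> a = m" (is "\<exists>m\<in>?A. ?B m")
  proof (rule Zorns_po_lemma)
    show "Partial_order ?R"
      by (auto simp: partial_order_on_def preorder_on_def
          antisym_def refl_on_def trans_def Field_def bot_unique)
    show "\<exists>u\<in>Field ?R. \<forall>a\<in>C. (a, u) \<in> ?R" if C: "C \<in> Chains ?R" for C
    proof (simp, intro exI conjI ballI)
      have Inf_C: "Inf C \<noteq> bot" "Inf C \<le> F" if "C \<noteq> {}"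
      proof -
        from C that have "Inf C = bot \<longleftrightarrow> (\<exists>x\<in>C. x = bot)"
          unfolding trivial_limit_def by (intro eventually_Inf_base) (auto simp: Chains_def)
        with C show "Inf C \<noteq> bot"
          by (simp add: bot_notin_R)
        from that obtain x where "x \<in> C" by auto
        with C show "Inf C \<le> F"
          by (auto intro!: Inf_lower2[of x] simp: Chains_def)
      qed
      then have [simp]: "inf F (Inf C) = (if C = {} then F else Inf C)"
        using C by (auto simp add: inf_absorb2)
      from C show "inf F (Inf C) \<noteq> bot"
        by (simp add: F Inf_C)
      from C show "inf F (Inf C) \<le> F"
        by (simp add: Chains_def Inf_C F)
      with C show "inf F (Inf C) \<le> x" "x \<le> F" if "x \<in> C" for x
        using that  by (auto intro: Inf_lower simp: Chains_def)
    qed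
  qed
  then obtain U where U: "U \<in> ?A" "?B U" ..
  show ?thesis
  proof
    from U show "U \<le> F \<and> uf U"
      by (auto intro!: max_filter_uf)
  qed
qed

definition tailp :: "nat \<Rightarrow> nat set \<Rightarrow> bool" where
  "tailp n F \<longleftrightarrow> finite F \<and> F \<noteq> {} \<and> (\<forall>x\<in>F. n < x)"

definition Gam :: "nat set filter set" where
  "Gam = {p. uf p \<and> (\<forall>n. eventually (tailp n) p)}"

definition pl :: "nat set filter \<Rightarrow> nat set filter \<Rightarrow> nat set filter" where
  "pl p q = Abs_filter (\<lambda>P. eventually (\<lambda>F. eventually (\<lambda>G. P (F \<union> G)) q) p)"

lemma eventually_pl:
  "eventually P (pl p q) \<longleftrightarrow> eventually (\<lambda>F. eventually (\<lambda>G. P (F \<union> G)) q) p"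
  unfolding pl_def
proof (rule eventually_Abs_filter, rule is_filter.intro)
  show "eventually (\<lambda>F. eventually (\<lambda>G. True) q) p" by simp
next
  fix P Q
  assume a: "eventually (\<lambda>F. eventually (\<lambda>G. P (F \<union> G)) q) p"
    and b: "eventually (\<lambda>F. eventually (\<lambda>G. Q (F \<union> G)) q) p"
  show "eventually (\<lambda>F. eventually (\<lambda>G. P (F \<union> G) \<and> Q (F \<union> G)) q) p"
    using eventually_conj[OF a b] by (rule eventually_mono) (simp add: eventually_conj_iff)
next
  fix P Q :: "nat set \<Rightarrow> bool"
  assume m: "\<forall>x. P x \<longrightarrow> Q x"
    and a: "eventually (\<lambda>F. eventually (\<lambda>G. P (F \<union> G)) q) p"
  show "eventually (\<lambda>F. eventually (\<lambda>G. Q (F \<union> G)) q) p"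
    using a by (rule eventually_mono) (auto elim: eventually_mono simp: m)
qed

lemma pl_assoc: "pl (pl p q) s = pl p (pl q s)"
  by (simp add: filter_eq_iff eventually_pl Un_assoc)

lemma tailp_Un: "tailp n F \<Longrightarrow> tailp n G \<Longrightarrow> tailp n (F \<union> G)"
  by (auto simp: tailp_def)

lemma pl_Gam:
  assumes p: "p \<in> Gam" and q: "q \<in> Gam"
  shows "pl p q \<in> Gam"
proof -
  have up: "uf p" and uq: "uf q" using p q by (auto simp: Gam_def)
  have "uf (pl p q)"
  proof
    show "pl p q \<noteq> bot"
    proof
      assume "pl p q = bot"
      then have "eventually (\<lambda>x. False) (pl p q)" by simp
      then have "eventually (\<lambda>F. eventually (\<lambda>G. False) q) p" by (simp only: eventually_pl)
      then have "eventually (\<lambda>F. False) p" using uf.proper[OF uq] by (simp only: eventually_False)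
      then show False using uf.proper[OF up] by (simp only: eventually_False)
    qed
  next
    fix P
    have "eventually (\<lambda>x. \<not> P x) (pl p q) \<longleftrightarrow>
          eventually (\<lambda>F. \<not> eventually (\<lambda>G. P (F \<union> G)) q) p"
      by (simp add: eventually_pl uf.eventually_not_iff[OF uq])
    also have "\<dots> \<longleftrightarrow> \<not> eventually P (pl p q)"
      by (simp add: eventually_pl uf.eventually_not_iff[OF up])
    finally show "eventually P (pl p q) \<or> eventually (\<lambda>x. \<not> P x) (pl p q)" by blast
  qed
  moreover have "eventually (tailp n) (pl p q)" for n
  proof -
    have a: "eventually (tailp n) p" "eventually (tailp n) q" using p q by (auto simp: Gam_def)
    show ?thesis unfolding eventually_pl
      using a(1) by (rule eventually_mono) (rule eventually_mono[OF a(2)], erule (1) tailp_Un)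
  qed
  ultimately show ?thesis by (simp add: Gam_def)
qed


definition clo :: "nat set filter set \<Rightarrow> bool" where
  "clo K \<longleftrightarrow> (\<forall>q\<in>Gam. q \<le> Sup K \<longrightarrow> q \<in> K)"

definition KK :: "nat set filter set set" where
  "KK = {K. K \<subseteq> Gam \<and> K \<noteq> {} \<and> clo K \<and> (\<forall>a\<in>K. \<forall>b\<in>K. pl a b \<in> K)}"

lemma Gam_ne: "Gam \<noteq> {}"
proof -
  define F0 :: "nat set filter" where "F0 = Abs_filter (\<lambda>P. \<exists>n. \<forall>F. tailp n F \<longrightarrow> P F)"
  have ev: "eventually P F0 \<longleftrightarrow> (\<exists>n. \<forall>F. tailp n F \<longrightarrow> P F)" for P
    unfolding F0_def
  proof (rule eventually_Abs_filter, rule is_filter.intro)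
    show "\<exists>n. \<forall>F. tailp n F \<longrightarrow> True" by simp
  next
    fix P Q
    assume "\<exists>n. \<forall>F. tailp n F \<longrightarrow> P F" "\<exists>n. \<forall>F. tailp n F \<longrightarrow> Q F"
    then obtain n m where "\<forall>F. tailp n F \<longrightarrow> P F" "\<forall>F. tailp m F \<longrightarrow> Q F" by blast
    then have "\<forall>F. tailp (max n m) F \<longrightarrow> P F \<and> Q F" by (auto simp: tailp_def)
    then show "\<exists>n. \<forall>F. tailp n F \<longrightarrow> P F \<and> Q F" by blast
  next
    fix P Q :: "nat set \<Rightarrow> bool"
    assume "\<forall>x. P x \<longrightarrow> Q x" "\<exists>n. \<forall>F. tailp n F \<longrightarrow> P F"
    then show "\<exists>n. \<forall>F. tailp n F \<longrightarrow> Q F" by blast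
  qed
  have "F0 \<noteq> bot"
  proof
    assume "F0 = bot"
    then have "eventually (\<lambda>x. False) F0" by simp
    then obtain n where "\<forall>F. tailp n F \<longrightarrow> False" unfolding ev by blast
    moreover have "tailp n {Suc n}" by (simp add: tailp_def)
    ultimately show False by blast
  qed
  then obtain U where U: "U \<le> F0" "uf U" using ex_uf by blast
  have "eventually (tailp n) U" for n
    using U(1) unfolding le_filter_def ev by blast
  with U show ?thesis by (auto simp: Gam_def)
qed

lemma Gam_KK: "Gam \<in> KK"
  using Gam_ne pl_Gam by (auto simp: KK_def clo_def)

lemma ev_Sup_tail: "K \<subseteq> Gam \<Longrightarrow> eventually (tailp n) (Sup K)"
  by (auto simp: eventually_Sup Gam_def)

lemma chain_Inter_KK:
  assumes C: "C \<noteq> {}" "C \<subseteq> KK" and ch: "\<forall>X\<in>C. \<forall>Y\<in>C. X \<subseteq> Y \<or> Y \<subseteq> X"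
  shows "\<Inter>C \<in> KK"
proof -
  obtain K0 where K0: "K0 \<in> C" using C by blast
  have KG: "K \<subseteq> Gam" "K \<noteq> {}" "clo K" if "K \<in> C" for K using that C by (auto simp: KK_def)
  define B where "B = Sup ` C"
  have evB: "eventually P (Inf B) \<longleftrightarrow> (\<exists>b\<in>B. eventually P b)" for P
    unfolding B_def
  proof (rule eventually_Inf_base)
    show "Sup ` C \<noteq> {}" using C by simp
    fix F G assume "F \<in> Sup ` C" "G \<in> Sup ` C"
    then obtain X Y where XY: "X \<in> C" "Y \<in> C" "F = Sup X" "G = Sup Y" by blast
    show "\<exists>x\<in>Sup ` C. x \<le> inf F G"
    proof (cases "X \<subseteq> Y")
      case True
      then have "Sup X \<le> Sup Y" by (rule Sup_subset_mono)
      then show ?thesis using XY by (intro bexI[of _ "Sup X"]) (auto simp: inf_absorb1)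
    next
      case False
      then have "Y \<subseteq> X" using ch XY by blast
      then have "Sup Y \<le> Sup X" by (rule Sup_subset_mono)
      then show ?thesis using XY by (intro bexI[of _ "Sup Y"]) (auto simp: inf_absorb2)
    qed
  qed
  have "Inf B \<noteq> bot"
  proof
    assume "Inf B = bot"
    then have "eventually (\<lambda>x. False) (Inf B)" by simp
    then obtain b where b: "b \<in> B" "eventually (\<lambda>x. False) b" using evB by blast
    then obtain K where K: "K \<in> C" "eventually (\<lambda>x. False) (Sup K)" unfolding B_def by blast
    then obtain p where "p \<in> K" using KG by blast
    with K have "eventually (\<lambda>x. False) p" by (simp add: eventually_Sup)
    moreover have "uf p" using \<open>p \<in> K\<close> KG K by (auto simp: Gam_def)
    ultimately show False by (simp add: eventually_False uf.proper)
  qed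
  then obtain U where U: "U \<le> Inf B" "uf U" using ex_uf by blast
  have "eventually (tailp n) U" for n
  proof -
    have "eventually (tailp n) (Inf B)"
      by (subst evB) (use K0 ev_Sup_tail[OF KG(1)[OF K0]] in \<open>auto simp: B_def\<close>)
    then show ?thesis using U(1) unfolding le_filter_def by blast
  qed
  with U have UG: "U \<in> Gam" by (simp add: Gam_def)
  have "U \<in> K" if "K \<in> C" for K
  proof -
    have "Inf B \<le> Sup K" using that unfolding B_def by (auto intro: Inf_lower)
    then have "U \<le> Sup K" using U(1) by simp
    then show ?thesis using KG(3)[OF that] UG by (simp add: clo_def)
  qed
  then have ne: "\<Inter>C \<noteq> {}" by blast
  have cl: "clo (\<Inter>C)"
    unfolding clo_def
  proof (intro ballI impI)
    fix q assume q: "q \<in> Gam" "q \<le> Sup (\<Inter>C)"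
    show "q \<in> \<Inter>C"
    proof
      fix K assume K: "K \<in> C"
      have "Sup (\<Inter>C) \<le> Sup K" using K by (intro Sup_subset_mono) blast
      then show "q \<in> K" using q KG(3)[OF K] by (auto simp: clo_def)
    qed
  qed
  have "\<forall>a\<in>\<Inter>C. \<forall>b\<in>\<Inter>C. pl a b \<in> \<Inter>C" using C(2) by (auto simp: KK_def)
  moreover have "\<Inter>C \<subseteq> Gam" using KG(1)[OF K0] K0 by blast
  ultimately show ?thesis using ne cl by (simp add: KK_def)
qed

lemma KK_minimal: "\<exists>K\<in>KK. \<forall>K'\<in>KK. K' \<subseteq> K \<longrightarrow> K' = K"
proof -
  have "\<exists>M\<in>uminus ` KK. \<forall>X\<in>uminus ` KK. M \<subseteq> X \<longrightarrow> X = M"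
  proof (rule subset_Zorn_nonempty)
    show "uminus ` KK \<noteq> {}" using Gam_KK by blast
  next
    fix \<C> assume ne: "\<C> \<noteq> {}" and ch: "subset.chain (uminus ` KK) \<C>"
    define C where "C = uminus ` \<C>"
    have CK: "C \<subseteq> KK" using ch unfolding C_def subset_chain_def by auto
    have "\<forall>X\<in>C. \<forall>Y\<in>C. X \<subseteq> Y \<or> Y \<subseteq> X" using ch unfolding C_def subset_chain_def by auto
    then have "\<Inter>C \<in> KK" using chain_Inter_KK[of C] ne CK unfolding C_def by blast
    moreover have "\<Union>\<C> = - \<Inter>C" unfolding C_def by auto
    ultimately show "\<Union>\<C> \<in> uminus ` KK" by blast
  qed
  then obtain K where K: "K \<in> KK" "\<forall>X\<in>uminus ` KK. - K \<subseteq> X \<longrightarrow> X = - K" by blast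
  show ?thesis
  proof (intro bexI[OF _ K(1)] ballI impI)
    fix K' assume "K' \<in> KK" "K' \<subseteq> K"
    then have "- K' = - K" using K(2) by blast
    then show "K' = K" by simp
  qed
qed

lemma image_clo:
  assumes K: "K \<subseteq> Gam" "clo K" and p: "p \<in> Gam"
  shows "clo ((\<lambda>r. pl r p) ` K)"
  unfolding clo_def
proof (intro ballI impI)
  fix s assume s: "s \<in> Gam" "s \<le> Sup ((\<lambda>r. pl r p) ` K)"
  have us: "uf s" and up: "uf p" using s p by (auto simp: Gam_def)
  define E :: "nat set filter" where
    "E = Abs_filter (\<lambda>P. \<exists>Q. eventually Q s \<and> (\<forall>F. eventually (\<lambda>G. Q (F \<union> G)) p \<longrightarrow> P F))"
  have evE: "eventually P E \<longleftrightarrow> (\<exists>Q. eventually Q s \<and> (\<forall>F. eventually (\<lambda>G. Q (F \<union> G)) p \<longrightarrow> P F))" for P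
    unfolding E_def
  proof (rule eventually_Abs_filter, rule is_filter.intro)
    show "\<exists>Q. eventually Q s \<and> (\<forall>F. eventually (\<lambda>G. Q (F \<union> G)) p \<longrightarrow> True)"
      by (intro exI[of _ "\<lambda>x. True"]) simp
  next
    fix P1 P2
    assume "\<exists>Q. eventually Q s \<and> (\<forall>F. eventually (\<lambda>G. Q (F \<union> G)) p \<longrightarrow> P1 F)"
       "\<exists>Q. eventually Q s \<and> (\<forall>F. eventually (\<lambda>G. Q (F \<union> G)) p \<longrightarrow> P2 F)"
    then obtain Q1 Q2 where Q: "eventually Q1 s" "\<forall>F. eventually (\<lambda>G. Q1 (F \<union> G)) p \<longrightarrow> P1 F"
      "eventually Q2 s" "\<forall>F. eventually (\<lambda>G. Q2 (F \<union> G)) p \<longrightarrow> P2 F" by blast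
    show "\<exists>Q. eventually Q s \<and> (\<forall>F. eventually (\<lambda>G. Q (F \<union> G)) p \<longrightarrow> P1 F \<and> P2 F)"
      by (rule exI[of _ "\<lambda>x. Q1 x \<and> Q2 x"]) (use Q in \<open>auto simp: eventually_conj_iff\<close>)
  next
    fix P1 P2 :: "nat set \<Rightarrow> bool"
    assume "\<forall>x. P1 x \<longrightarrow> P2 x" "\<exists>Q. eventually Q s \<and> (\<forall>F. eventually (\<lambda>G. Q (F \<union> G)) p \<longrightarrow> P1 F)"
    then show "\<exists>Q. eventually Q s \<and> (\<forall>F. eventually (\<lambda>G. Q (F \<union> G)) p \<longrightarrow> P2 F)" by blast
  qed
  have "inf (Sup K) E \<noteq> bot"
  proof
    assume "inf (Sup K) E = bot"
    then have "eventually (\<lambda>x. False) (inf (Sup K) E)" by simp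
    then obtain R Q' where RQ: "eventually R (Sup K)" "eventually Q' E" "\<forall>x. R x \<and> Q' x \<longrightarrow> False"
      unfolding eventually_inf by blast
    then obtain Q where Q: "eventually Q s" "\<forall>F. eventually (\<lambda>G. Q (F \<union> G)) p \<longrightarrow> Q' F"
      unfolding evE by blast
    have "eventually (\<lambda>x. \<not> Q x) (pl r p)" if r: "r \<in> K" for r
    proof -
      have "eventually R r" using RQ(1) r by (simp add: eventually_Sup)
      then show ?thesis unfolding eventually_pl
      proof (rule eventually_mono)
        fix F assume "R F"
        then have "\<not> eventually (\<lambda>G. Q (F \<union> G)) p" using RQ(3) Q(2) by blast
        then show "eventually (\<lambda>G. \<not> Q (F \<union> G)) p" using uf.eventually_not_iff[OF up] by blast
      qed
    qed
    then have "eventually (\<lambda>x. \<not> Q x) (Sup ((\<lambda>r. pl r p) ` K))" by (simp add: eventually_Sup)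
    then have "eventually (\<lambda>x. \<not> Q x) s" using s(2) unfolding le_filter_def by blast
    with Q(1) show False using uf.eventually_not_iff[OF us] by blast
  qed
  then obtain U where U: "U \<le> inf (Sup K) E" "uf U" using ex_uf by blast
  have USK: "U \<le> Sup K" using U(1) by simp
  have "eventually (tailp n) U" for n
    using ev_Sup_tail[OF K(1), of n] USK unfolding le_filter_def by blast
  with U have UG: "U \<in> Gam" by (simp add: Gam_def)
  note USK
  then have UK: "U \<in> K" using K(2) UG by (simp add: clo_def)
  have "pl U p \<le> s"
    unfolding le_filter_def
  proof (intro allI impI)
    fix P assume "eventually P s"
    then have "eventually (\<lambda>F. eventually (\<lambda>G. P (F \<union> G)) p) E" unfolding evE by blast
    then have "eventually (\<lambda>F. eventually (\<lambda>G. P (F \<union> G)) p) U" using U(1) unfolding le_filter_def eventually_inf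
      by (metis (no_types, lifting) eventually_True)
    then show "eventually P (pl U p)" by (simp add: eventually_pl)
  qed
  moreover have "pl U p \<noteq> bot" using pl_Gam[OF UG p] by (simp add: Gam_def uf.proper)
  ultimately have "s = pl U p" using uf.max_filter[OF us] by blast
  then show "s \<in> (\<lambda>r. pl r p) ` K" using UK by blast
qed

lemma idempotent_exists: "\<exists>p\<in>Gam. pl p p = p"
proof -
  obtain K where K: "K \<in> KK" and min: "\<forall>K'\<in>KK. K' \<subseteq> K \<longrightarrow> K' = K" using KK_minimal by blast
  have KG: "K \<subseteq> Gam" "K \<noteq> {}" "clo K" and Kc: "\<forall>a\<in>K. \<forall>b\<in>K. pl a b \<in> K" using K by (auto simp: KK_def)
  obtain p where pK: "p \<in> K" using KG by blast
  have pG: "p \<in> Gam" using pK KG by blast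
  have up: "uf p" using pG by (simp add: Gam_def)
  let ?K1 = "(\<lambda>r. pl r p) ` K"
  have "?K1 \<in> KK"
    unfolding KK_def
  proof (intro CollectI conjI ballI)
    show "?K1 \<subseteq> Gam" using KG pG pl_Gam by blast
    show "?K1 \<noteq> {}" using KG by blast
    show "clo ?K1" using image_clo KG pG by blast
    fix a b assume "a \<in> ?K1" "b \<in> ?K1"
    then obtain a' b' where ab: "a' \<in> K" "b' \<in> K" "a = pl a' p" "b = pl b' p" by blast
    have "pl a b = pl (pl (pl a' p) b') p" using ab by (simp add: pl_assoc)
    moreover have "pl (pl a' p) b' \<in> K" using ab pK Kc by blast
    ultimately show "pl a b \<in> ?K1" by blast
  qed
  moreover have "?K1 \<subseteq> K" using Kc pK by blast
  ultimately have "?K1 = K" using min by blast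
  then obtain q where q: "q \<in> K" "pl q p = p" using pK by (metis imageE)
  let ?L = "{q\<in>K. pl q p = p}"
  have "?L \<in> KK"
    unfolding KK_def
  proof (rule CollectI, intro conjI ballI)
    show "?L \<subseteq> Gam" using KG by blast
    show "?L \<noteq> {}" using q by blast
    show "clo ?L"
      unfolding clo_def
    proof (intro ballI impI)
      fix r assume r: "r \<in> Gam" "r \<le> Sup ?L"
      have "Sup ?L \<le> Sup K" by (rule Sup_subset_mono) blast
      then have rK: "r \<in> K" using r KG(3) by (auto simp: clo_def)
      have "pl r p \<le> p"
        unfolding le_filter_def
      proof (intro allI impI)
        fix P assume P: "eventually P p"
        have "eventually (\<lambda>F. eventually (\<lambda>G. P (F \<union> G)) p) l" if "l \<in> ?L" for l
          using that P by (metis (mono_tags, lifting) eventually_pl mem_Collect_eq)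
        then have "eventually (\<lambda>F. eventually (\<lambda>G. P (F \<union> G)) p) (Sup ?L)" by (simp add: eventually_Sup)
        then have "eventually (\<lambda>F. eventually (\<lambda>G. P (F \<union> G)) p) r" using r(2) unfolding le_filter_def by blast
        then show "eventually P (pl r p)" by (simp add: eventually_pl)
      qed
      moreover have "pl r p \<noteq> bot" using pl_Gam[OF r(1) pG] by (simp add: Gam_def uf.proper)
      ultimately have "p = pl r p" using uf.max_filter[OF up] by blast
      then show "r \<in> ?L" using rK by simp
    qed
    fix a b assume "a \<in> ?L" "b \<in> ?L"
    then show "pl a b \<in> ?L" using Kc by (simp add: pl_assoc)
  qed
  moreover have "?L \<subseteq> K" by blast
  ultimately have "?L = K" using min by blast
  then have "pl p p = p" using pK by blast
  then show ?thesis using pG by blast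
qed


lemma construct_seq:
  assumes pG: "p \<in> Gam" and evP: "eventually P p"
    and stepP: "\<And>F. P F \<Longrightarrow> eventually (\<lambda>G. P (F \<union> G)) p"
  shows "\<exists>h :: nat \<Rightarrow> nat set. (\<forall>n. finite (h n) \<and> h n \<noteq> {}) \<and> (\<forall>m n. m < n \<longrightarrow> (\<forall>x\<in>h m. \<forall>y\<in>h n. x < y))
            \<and> (\<forall>G. finite G \<and> G \<noteq> {} \<longrightarrow> P (\<Union>(h ` G)))"
proof -
  have up: "uf p" and tl: "\<And>n. eventually (tailp n) p" using pG by (auto simp: Gam_def)
  have ex: "\<exists>x. R x" if "eventually R p" for R
    using eventually_happens'[OF uf.proper[OF up] that] .
  define Pn where "Pn = (\<lambda>(n::nat) (x :: nat set \<times> nat set set).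
     finite (snd x) \<and> fst x \<in> snd x \<and> (\<forall>Y\<in>snd x. P Y \<and> finite Y) \<and> tailp 0 (fst x))"
  define Qn where "Qn = (\<lambda>(n::nat) (x :: nat set \<times> nat set set) (y :: nat set \<times> nat set set).
     (\<forall>a\<in>\<Union>(snd x). \<forall>b\<in>fst y. a < b) \<and> snd y = snd x \<union> {fst y} \<union> (\<lambda>Y. Y \<union> fst y) ` snd x)"
  have "\<exists>f. \<forall>n. Pn n (f n) \<and> Qn n (f n) (f (Suc n))"
  proof (rule dependent_nat_choice)
    have "eventually (\<lambda>F. P F \<and> tailp 0 F) p" using evP tl[of 0] by (simp add: eventually_conj_iff)
    then obtain F where F: "P F" "tailp 0 F" using ex by blast
    then have "Pn 0 (F, {F})" by (auto simp: Pn_def tailp_def)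
    then show "\<exists>x. Pn 0 x" by blast
  next
    fix x n assume x: "Pn n x"
    obtain F W where FW: "x = (F, W)" by (cases x)
    have W: "finite W" "\<forall>Y\<in>W. P Y \<and> finite Y" "F \<in> W" "tailp 0 F" using x FW by (auto simp: Pn_def)
    define m where "m = Max (\<Union>W)"
    have fin: "finite (\<Union>W)" using W by auto
    have "eventually (\<lambda>G. \<forall>Y\<in>W. P (Y \<union> G)) p"
      using W by (intro eventually_ball_finite) (auto intro: stepP)
    then have "eventually (\<lambda>G. P G \<and> tailp m G \<and> (\<forall>Y\<in>W. P (Y \<union> G))) p"
      using evP tl[of m] by (simp add: eventually_conj_iff)
    then obtain G where G: "P G" "tailp m G" "\<forall>Y\<in>W. P (Y \<union> G)" using ex by blast
    define y where "y = (G, W \<union> {G} \<union> (\<lambda>Y. Y \<union> G) ` W)"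
    have "Pn (Suc n) y" using W G unfolding Pn_def y_def by (auto simp: tailp_def)
    moreover have "Qn n x y"
      unfolding Qn_def y_def FW
    proof (simp, intro ballI)
      fix a b Y assume "Y \<in> W" "a \<in> Y" "b \<in> G"
      then have "a \<le> m" unfolding m_def using fin by (auto intro: Max_ge)
      moreover have "m < b" using G(2) \<open>b \<in> G\<close> by (auto simp: tailp_def)
      ultimately show "a < b" by simp
    qed
    ultimately show "\<exists>y. Pn (Suc n) y \<and> Qn n x y" by blast
  qed
  then obtain f where f: "\<And>n. Pn n (f n)" "\<And>n. Qn n (f n) (f (Suc n))" by blast
  define h where "h n = fst (f n)" for n
  define W where "W n = snd (f n)" for n
  have hW: "h n \<in> W n" "finite (h n)" "h n \<noteq> {}" for n using f(1)[of n] by (auto simp: Pn_def h_def W_def tailp_def)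
  have WP: "\<forall>Y\<in>W n. P Y" for n using f(1)[of n] by (auto simp: Pn_def W_def)
  have Wsuc: "W (Suc n) = W n \<union> {h (Suc n)} \<union> (\<lambda>Y. Y \<union> h (Suc n)) ` W n" for n
    using f(2)[of n] by (simp add: Qn_def W_def h_def)
  have Wlt: "\<forall>a\<in>\<Union>(W n). \<forall>b\<in>h (Suc n). a < b" for n
    using f(2)[of n] by (simp add: Qn_def W_def h_def)
  have Wmono: "W m \<subseteq> W n" if "m \<le> n" for m n
    using that by (induction n rule: dec_induct) (auto simp: Wsuc)
  have blocks: "\<forall>x\<in>h m. \<forall>y\<in>h n. x < y" if mn: "m < n" for m n
  proof -
    obtain k where k: "n = Suc k" "m \<le> k" using mn by (cases n) auto
    have "h m \<in> W k" using Wmono[OF k(2)] hW(1)[of m] by blast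
    then show ?thesis using Wlt[of k] k(1) by blast
  qed
  have FU: "\<Union>(h ` G) \<in> W n" if "G \<subseteq> {..n}" "G \<noteq> {}" for n G
    using that
  proof (induction n arbitrary: G)
    case 0
    then have "G = {0}" by auto
    then show ?case using hW(1)[of 0] by simp
  next
    case (Suc n)
    show ?case
    proof (cases "Suc n \<in> G")
      case False
      then have "G \<subseteq> {..n}" using Suc.prems by (auto simp: le_Suc_eq)
      then show ?thesis using Suc.IH Suc.prems Wsuc[of n] by blast
    next
      case True
      define G' where "G' = G - {Suc n}"
      have G': "G' \<subseteq> {..n}" using Suc.prems by (auto simp: G'_def le_Suc_eq)
      show ?thesis
      proof (cases "G' = {}")
        case True
        then have "G = {Suc n}" using \<open>Suc n \<in> G\<close> by (auto simp: G'_def)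
        then show ?thesis using Wsuc[of n] by simp
      next
        case False
        have "\<Union>(h ` G') \<in> W n" using Suc.IH[OF G' False] .
        moreover have "\<Union>(h ` G) = \<Union>(h ` G') \<union> h (Suc n)" using \<open>Suc n \<in> G\<close> by (auto simp: G'_def)
        ultimately show ?thesis using Wsuc[of n] by blast
      qed
    qed
  qed
  have "P (\<Union>(h ` G))" if "finite G" "G \<noteq> {}" for G
  proof -
    have "G \<subseteq> {..Max G}" using that by auto
    then show ?thesis using FU[of G "Max G"] that WP by blast
  qed
  then have A3: "\<forall>G. finite G \<and> G \<noteq> {} \<longrightarrow> P (\<Union>(h ` G))" by blast
  have A1: "\<forall>n. finite (h n) \<and> h n \<noteq> {}" using hW by blast
  have A2: "\<forall>m n. m < n \<longrightarrow> (\<forall>x\<in>h m. \<forall>y\<in>h n. x < y)" using blocks by blast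
  show ?thesis by (rule exI[of _ h]) (use A1 A2 A3 in blast)
qed

lemma hindman:
  fixes \<chi> :: "nat set \<Rightarrow> nat"
  assumes col: "\<forall>F. finite F \<and> F \<noteq> {} \<longrightarrow> \<chi> F \<in> {1..r}"
  shows "\<exists>(h :: nat \<Rightarrow> nat set) k. (\<forall>n. finite (h n) \<and> h n \<noteq> {}) \<and> (\<forall>m n. m < n \<longrightarrow> (\<forall>x\<in>h m. \<forall>y\<in>h n. x < y))
            \<and> (\<forall>G. finite G \<and> G \<noteq> {} \<longrightarrow> \<chi> (\<Union>(h ` G)) = k)"
proof -
  obtain p where pG: "p \<in> Gam" and idem: "pl p p = p" using idempotent_exists by blast
  have up: "uf p" and tl: "\<And>n. eventually (tailp n) p" using pG by (auto simp: Gam_def)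
  have idem': "eventually Q p \<longleftrightarrow> eventually (\<lambda>F. eventually (\<lambda>G. Q (F \<union> G)) p) p" for Q
    using eventually_pl[of Q p p] idem by simp
  have "\<exists>k. eventually (\<lambda>F. \<chi> F = k) p"
  proof (rule ccontr)
    assume "\<nexists>k. eventually (\<lambda>F. \<chi> F = k) p"
    then have "\<forall>k\<in>{1..r}. eventually (\<lambda>F. \<chi> F \<noteq> k) p" using uf.eventually_not_iff[OF up] by blast
    then have "eventually (\<lambda>F. \<forall>k\<in>{1..r}. \<chi> F \<noteq> k) p" by (intro eventually_ball_finite) auto
    moreover have "eventually (\<lambda>F. \<chi> F \<in> {1..r}) p"
      using tl[of 0] by (rule eventually_mono) (use col in \<open>auto simp: tailp_def\<close>)
    ultimately have "eventually (\<lambda>F. False) p" by (auto elim: eventually_rev_mp eventually_mono)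
    then show False using uf.proper[OF up] by (simp add: eventually_False)
  qed
  then obtain k where k: "eventually (\<lambda>F. \<chi> F = k) p" by blast
  define A where "A F = (\<chi> F = k)" for F
  define As where "As F = (A F \<and> eventually (\<lambda>G. A (F \<union> G)) p)" for F
  have evAs: "eventually As p"
  proof -
    have "eventually A p" unfolding A_def by (rule k)
    moreover then have "eventually (\<lambda>F. eventually (\<lambda>G. A (F \<union> G)) p) p" using idem' by blast
    ultimately show ?thesis unfolding As_def by (simp add: eventually_conj_iff)
  qed
  have stepAs: "eventually (\<lambda>G. As (F \<union> G)) p" if "As F" for F
  proof -
    have a: "eventually (\<lambda>G. A (F \<union> G)) p" using that by (simp add: As_def)
    then have b: "eventually (\<lambda>G. eventually (\<lambda>H. A (F \<union> (G \<union> H))) p) p"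
      using idem'[of "\<lambda>G. A (F \<union> G)"] by simp
    show ?thesis using eventually_conj[OF a b]
      by (rule eventually_mono) (simp add: As_def Un_assoc)
  qed
  obtain h :: "nat \<Rightarrow> nat set" where h: "\<forall>n. finite (h n) \<and> h n \<noteq> {}" "\<forall>m n. m < n \<longrightarrow> (\<forall>x\<in>h m. \<forall>y\<in>h n. x < y)"
    "\<forall>G. finite G \<and> G \<noteq> {} \<longrightarrow> As (\<Union>(h ` G))"
    using construct_seq[OF pG evAs stepAs] by blast
  have "\<forall>G. finite G \<and> G \<noteq> {} \<longrightarrow> \<chi> (\<Union>(h ` G)) = k" using h(3) by (simp add: As_def A_def)
  then show ?thesis using h(1,2) by blast
qed


theorem lemma2p4:
  fixes S :: "nat set set" and r :: nat and c :: "nat set \<Rightarrow> nat"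
  assumes "IP_set S" and "r \<ge> 1" and "\<forall>A\<in>S. c A \<in> {1..r}"
  shows "(\<exists>S'. IP_set S' \<and> S' \<subseteq> S \<and> (\<exists>k. \<forall>A\<in>S'. c A = k))
       \<or> (\<exists>\<B> \<T>. finite \<B> \<and> \<B> \<subseteq> S \<and> IP_set \<T> \<and> \<T> \<subseteq> minus_family S \<B>
              \<and> full_matches c \<B> \<T>)"
proof -
  have finS: "\<forall>A\<in>S. finite A" and unS: "\<And>F. finite F \<Longrightarrow> F \<noteq> {} \<Longrightarrow> F \<subseteq> S \<Longrightarrow> \<Union>F \<in> S"
    using assms(1) by (auto simp: IP_set_def)
  obtain D where D: "infinite D" "D \<subseteq> S" "\<forall>A\<in>D. \<forall>B\<in>D. A \<noteq> B \<longrightarrow> A \<inter> B = {}"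
    using assms(1) by (auto simp: IP_set_def)
  have "infinite (D - {{}})" using D(1) by simp
  then obtain d :: "nat \<Rightarrow> nat set" where d: "inj d" "range d \<subseteq> D - {{}}"
    using infinite_countable_subset by blast
  have dS: "d i \<in> S" and dne: "d i \<noteq> {}" for i using d D by auto
  have ddis: "d i \<inter> d j = {}" if ij: "i \<noteq> j" for i j
  proof -
    have "d i \<noteq> d j" using d(1) ij by (simp add: inj_eq)
    moreover have "d i \<in> D" "d j \<in> D" using d(2) by auto
    ultimately show ?thesis using D(3) by blast
  qed
  have Un_in: "\<Union>(d ` G) \<in> S" if "finite G" "G \<noteq> {}" for G
    using unS[of "d ` G"] that dS by auto
  define \<chi> where "\<chi> G = c (\<Union>(d ` G))" for G
  have col: "\<forall>F. finite F \<and> F \<noteq> {} \<longrightarrow> \<chi> F \<in> {1..r}"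
    using Un_in assms(3) by (auto simp: \<chi>_def)
  obtain h :: "nat \<Rightarrow> nat set" and k where
    h1: "\<forall>n. finite (h n) \<and> h n \<noteq> {}" and
    h2: "\<forall>m n. m < n \<longrightarrow> (\<forall>x\<in>h m. \<forall>y\<in>h n. x < y)" and
    h3: "\<forall>G. finite G \<and> G \<noteq> {} \<longrightarrow> \<chi> (\<Union>(h ` G)) = k"
    using hindman[OF col] by (elim exE conjE) assumption
  define V where "V G = \<Union>(d ` \<Union>(h ` G))" for G
  define S' where "S' = V ` {G. finite G \<and> G \<noteq> {}}"
  have hfin: "finite (\<Union>(h ` G))" "\<Union>(h ` G) \<noteq> {}" if "finite G" "G \<noteq> {}" for G
    using that h1 by auto
  have VS: "V G \<in> S" if "finite G" "G \<noteq> {}" for G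
    unfolding V_def using Un_in hfin[OF that] by blast
  have Vfin: "finite (V G)" if "finite G" "G \<noteq> {}" for G
    using VS[OF that] finS by blast
  have Vcol: "c (V G) = k" if "finite G" "G \<noteq> {}" for G
    using h3 that by (simp add: V_def \<chi>_def)
  have hdis: "h i \<inter> h j = {}" if "i \<noteq> j" for i j
  proof (cases "i < j")
    case True
    then have "\<forall>x\<in>h i. \<forall>y\<in>h j. x < y" using h2 by blast
    then show ?thesis by (metis disjoint_iff less_irrefl)
  next
    case False then have "j < i" using that by simp
    then have "\<forall>x\<in>h j. \<forall>y\<in>h i. x < y" using h2 by blast
    then show ?thesis by (metis disjoint_iff less_irrefl)
  qed
  have Vdis: "V {i} \<inter> V {j} = {}" if "i \<noteq> j" for i j
  proof -
    have "d a \<inter> d b = {}" if ab: "a \<in> h i" "b \<in> h j" for a b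
    proof -
      have "a \<noteq> b" using hdis[OF \<open>i \<noteq> j\<close>] ab by blast
      then show ?thesis by (rule ddis)
    qed
    moreover have "V {i} = (\<Union>a\<in>h i. d a)" "V {j} = (\<Union>a\<in>h j. d a)" by (simp_all add: V_def)
    ultimately show ?thesis by blast
  qed
  have Vne: "V {i} \<noteq> {}" for i
  proof -
    obtain a where "a \<in> h i" using h1 by blast
    then show ?thesis using dne[of a] unfolding V_def by auto
  qed
  have "IP_set S'"
    unfolding IP_set_def
  proof (intro conjI allI impI ballI)
    fix A assume "A \<in> S'"
    then obtain G where G: "G \<in> {G. finite G \<and> G \<noteq> {}}" "A = V G" unfolding S'_def by (rule imageE)
    then show "finite A" using Vfin[of G] by simp
  next
    fix F assume F: "finite F \<and> F \<noteq> {} \<and> F \<subseteq> S'"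
    then have "F \<subseteq> V ` {G. finite G \<and> G \<noteq> {}}" unfolding S'_def by simp
    from finite_subset_image[OF conjunct1[OF F] this]
    obtain \<G> where G: "\<G> \<subseteq> {G. finite G \<and> G \<noteq> {}}" "finite \<G>" "F = V ` \<G>"
      by blast
    have ne: "\<G> \<noteq> {}" using F G by blast
    have "\<Union>F = V (\<Union>\<G>)" unfolding G(3) V_def by auto
    moreover have "finite (\<Union>\<G>)" "\<Union>\<G> \<noteq> {}" using G ne by auto
    ultimately show "\<Union>F \<in> S'" unfolding S'_def by blast
  next
    let ?E = "range (\<lambda>i. V {i})"
    have "inj (\<lambda>i. V {i})"
    proof (rule injI)
      fix i j assume "V {i} = V {j}"
      then show "i = j" using Vdis[of i j] Vne[of i] by (cases "i = j") auto
    qed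
    then have "infinite ?E" using finite_imageD infinite_UNIV_nat by blast
    moreover have "?E \<subseteq> S'" unfolding S'_def by auto
    moreover have "\<forall>A\<in>?E. \<forall>B\<in>?E. A \<noteq> B \<longrightarrow> A \<inter> B = {}"
    proof (intro ballI impI)
      fix A B assume AB: "A \<in> ?E" "B \<in> ?E" "A \<noteq> B"
      then obtain i j where ij: "A = V {i}" "B = V {j}" by blast
      with AB(3) have "i \<noteq> j" by blast
      then show "A \<inter> B = {}" using Vdis ij by simp
    qed
    ultimately show "\<exists>D. infinite D \<and> D \<subseteq> S' \<and> (\<forall>A\<in>D. \<forall>B\<in>D. A \<noteq> B \<longrightarrow> A \<inter> B = {})" by blast
  qed
  moreover have "S' \<subseteq> S" unfolding S'_def using VS by blast
  moreover have "\<forall>A\<in>S'. c A = k" unfolding S'_def using Vcol by blast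
  ultimately show ?thesis by blast
qed

end
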